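(* Let $G=(V,E)$ be a task-assistance graph and $\pi=\langle v_0,\dots,v_k\rangle$ ($k\ge1$) a path in $G$, and let $N_{\mathcal{I}}^{\pi}:=\sum_{i=0}^{k}|\mathcal{I}(v_i)|$ be the total number of intervals of the vertices of $\pi$. Then the set of vertex-critical times $C_0$ of $\pi$ can be computed in $O(k+N_{\mathcal{I}}^{\pi})$ time.
   Context: A task-assistance graph is a directed graph $G=(V,E)$ in which every edge $e$ has a length $\ell(e)\ge 0$ and every vertex $v$ has a finite set $\mathcal{I}(v)$ of closed intervals contained in $[0,1]$. A path is $\pi=\langle v_0,\dots,v_k\rangle$ with $(v_i,v_{i+1})\in E$; vertices may repeat, and all quantities below are attached to positions $i$ in the path. Set $\ell(v_{-1},v_0):=0$, $\ell(v_k,v_{k+1}):=0$, $\ell(v_i):=\sum_{j=0}^{i-1}\ell(v_j,v_{j+1})$, $\ell^+(v_i):=\ell(v_i)+\tfrac12\ell(v_i,v_{i+1})$, $\ell^-(v_i):=\ell(v_i)-\tfrac12\ell(v_{i-1},v_i)$, and $\ell^+(v_i,v_j):=\ell^+(v_j)-\ell^+(v_i)$. Augmented interval sets per position: $J_i:=\mathcal{I}(v_i)$ for $0<i<k$, $J_0:=\mathcal{I}(v_0)\cup\{[\ell^+(v_0),\ell^+(v_0)]\}$, $J_k:=\mathcal{I}(v_k)\cup\{[1-\ell^+(v_{k-1},v_k),\,1-\ell^+(v_{k-1},v_k)]\}$. For positions $0\le a<b\le k$ the vertex-pair critical times are $C(a,b):=\{t_e:[t_s,t_e]\in J_a\}\cup\{t_s-(\ell^-(v_b)-\ell^+(v_a)):[t_s,t_e]\in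 J_b\}$, and the vertex-critical times of position $i$ are $C_i:=\bigcup_{0\le a<b\le k}\{\tau+\ell^+(v_a,v_i):\tau\in C(a,b)\}$. *)

theory Defs
  imports Complex_Main "HOL-Library.Time_Functions"
begin

text \<open>A closed interval [t_s, t_e] is represented by its endpoint pair (t_s, t_e).
  The graph has vertex type 'v, edge set E, edge length function len, and
  interval assignment I.\<close>

definition task_assistance_graph ::
  "('v \<times> 'v) set \<Rightarrow> ('v \<Rightarrow> 'v \<Rightarrow> real) \<Rightarrow> ('v \<Rightarrow> (real \<times> real) set) \<Rightarrow> bool" where
  "task_assistance_graph E len I \<longleftrightarrow>
     (\<forall>u v. (u, v) \<in> E \<longrightarrow> len u v \<ge> 0) \<and>
     (\<forall>v. finite (I v) \<and> (\<forall>(s, e) \<in> I v. 0 \<le> s \<and> s \<le> e \<and> e \<le> 1))"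

definition is_path :: "('v \<times> 'v) set \<Rightarrow> 'v list \<Rightarrow> bool" where
  "is_path E vs \<longleftrightarrow> vs \<noteq> [] \<and> (\<forall>i. i + 1 < length vs \<longrightarrow> (vs ! i, vs ! (i + 1)) \<in> E)"

text \<open>Edge length l(v_i, v_{i+1}) at position i, with l(v_k, v_{k+1}) := 0.\<close>
definition elen :: "('v \<Rightarrow> 'v \<Rightarrow> real) \<Rightarrow> 'v list \<Rightarrow> nat \<Rightarrow> real" where
  "elen len vs i = (if i + 1 < length vs then len (vs ! i) (vs ! (i + 1)) else 0)"

definition lpos :: "('v \<Rightarrow> 'v \<Rightarrow> real) \<Rightarrow> 'v list \<Rightarrow> nat \<Rightarrow> real" where
  "lpos len vs i = (\<Sum>j<i. elen len vs j)"

definition lplus :: "('v \<Rightarrow> 'v \<Rightarrow> real) \<Rightarrow> 'v list \<Rightarrow> nat \<Rightarrow> real" where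
  "lplus len vs i = lpos len vs i + elen len vs i / 2"

text \<open>l^-(v_i), with l(v_{-1}, v_0) := 0\<close>
definition lminus :: "('v \<Rightarrow> 'v \<Rightarrow> real) \<Rightarrow> 'v list \<Rightarrow> nat \<Rightarrow> real" where
  "lminus len vs i = lpos len vs i - (if i = 0 then 0 else elen len vs (i - 1)) / 2"

definition Jset :: "('v \<Rightarrow> 'v \<Rightarrow> real) \<Rightarrow> ('v \<Rightarrow> (real \<times> real) set) \<Rightarrow> 'v list \<Rightarrow> nat \<Rightarrow> (real \<times> real) set" where
  "Jset len I vs i =
     (let k = length vs - 1 in
      I (vs ! i)
      \<union> (if i = 0 then {(lplus len vs 0, lplus len vs 0)} else {})
      \<union> (if i = k then {(1 - (lplus len vs k - lplus len vs (k - 1)),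
                          1 - (lplus len vs k - lplus len vs (k - 1)))} else {}))"

definition Cpair :: "('v \<Rightarrow> 'v \<Rightarrow> real) \<Rightarrow> ('v \<Rightarrow> (real \<times> real) set) \<Rightarrow> 'v list \<Rightarrow> nat \<Rightarrow> nat \<Rightarrow> real set" where
  "Cpair len I vs a b =
     {te. \<exists>ts. (ts, te) \<in> Jset len I vs a}
     \<union> {ts - (lminus len vs b - lplus len vs a) | ts te. (ts, te) \<in> Jset len I vs b}"

definition Cvert :: "('v \<Rightarrow> 'v \<Rightarrow> real) \<Rightarrow> ('v \<Rightarrow> (real \<times> real) set) \<Rightarrow> 'v list \<Rightarrow> nat \<Rightarrow> real set" where
  "Cvert len I vs i =
     (\<Union>a. \<Union>b. if a < b \<and> b \<le> length vs - 1
        then (\<lambda>\<tau>. \<tau> + (lplus len vs i - lplus len vs a)) ` Cpair len I vs a b else {})"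

text \<open>Input: one entry per position i = 0..k, namely (list of intervals of v_i, l(v_i,v_{i+1})).\<close>

fun ends :: "real \<Rightarrow> (real \<times> real) list \<Rightarrow> real list" where
  "ends c [] = []"
| "ends c ((s, e) # xs) = (e + c) # ends c xs"

fun starts :: "real \<Rightarrow> (real \<times> real) list \<Rightarrow> real list" where
  "starts c [] = []"
| "starts c ((s, e) # xs) = (s + c) # starts c xs"

text \<open>go p0 L dprev rest processes positions i >= 1, where L = l(v_i), dprev = l(v_{i-1},v_i).\<close>
fun go :: "real \<Rightarrow> real \<Rightarrow> real \<Rightarrow> ((real \<times> real) list \<times> real) list \<Rightarrow> real list" where
  "go p0 L dprev [] = []"
| "go p0 L dprev [(I, d)] =
     starts (p0 - (L - dprev / 2)) ((1 - dprev / 2, 1 - dprev / 2) # I)"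
| "go p0 L dprev ((I, d) # x # rest) =
     ends (p0 - (L + d / 2)) I @ starts (p0 - (L - dprev / 2)) I @ go p0 (L + d) d (x # rest)"

fun crit0 :: "((real \<times> real) list \<times> real) list \<Rightarrow> real list" where
  "crit0 [] = []"
| "crit0 ((I, d) # rest) = ends 0 ((d / 2, d / 2) # I) @ go (d / 2) d d rest"

text \<open>Step-counting functions, written by hand following the conventions of the
  time_fun command of HOL-Library (each call of a defined function costs 1 plus the
  costs of the defined functions it calls; list append xs @ ys costs T_append xs ys
  = length xs + 1; arithmetic and constructors are free).\<close>

fun T_ends :: "real \<Rightarrow> (real \<times> real) list \<Rightarrow> nat" where
  "T_ends c [] = 1"
| "T_ends c ((s, e) # xs) = T_ends c xs + 1"

fun T_starts :: "real \<Rightarrow> (real \<times> real) list \<Rightarrow> nat" where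
  "T_starts c [] = 1"
| "T_starts c ((s, e) # xs) = T_starts c xs + 1"

fun T_go :: "real \<Rightarrow> real \<Rightarrow> real \<Rightarrow> ((real \<times> real) list \<times> real) list \<Rightarrow> nat" where
  "T_go p0 L dprev [] = 1"
| "T_go p0 L dprev [(I, d)] =
     T_starts (p0 - (L - dprev / 2)) ((1 - dprev / 2, 1 - dprev / 2) # I) + 1"
| "T_go p0 L dprev ((I, d) # x # rest) =
     T_ends (p0 - (L + d / 2)) I + T_starts (p0 - (L - dprev / 2)) I
     + T_go p0 (L + d) d (x # rest)
     + T_append (starts (p0 - (L - dprev / 2)) I) (go p0 (L + d) d (x # rest))
     + T_append (ends (p0 - (L + d / 2)) I)
                (starts (p0 - (L - dprev / 2)) I @ go p0 (L + d) d (x # rest)) + 1"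

fun T_crit0 :: "((real \<times> real) list \<times> real) list \<Rightarrow> nat" where
  "T_crit0 [] = 1"
| "T_crit0 ((I, d) # rest) =
     T_ends 0 ((d / 2, d / 2) # I) + T_go (d / 2) d d rest
     + T_append (ends 0 ((d / 2, d / 2) # I)) (go (d / 2) d d rest) + 1"

end

theory Submission
  imports Defs
begin

lemma set_ends: "set (ends c xs) = {e + c | s e. (s, e) \<in> set xs}"
  by (induction c xs rule: ends.induct) auto

lemma set_starts: "set (starts c xs) = {s + c | s e. (s, e) \<in> set xs}"
  by (induction c xs rule: starts.induct) auto

lemma len_ends: "length (ends c xs) = length xs"
  by (induction c xs rule: ends.induct) auto

lemma len_starts: "length (starts c xs) = length xs"
  by (induction c xs rule: starts.induct) auto

lemma T_ends_eq: "T_ends c xs = length xs + 1"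
  by (induction c xs rule: T_ends.induct) auto

lemma T_starts_eq: "T_starts c xs = length xs + 1"
  by (induction c xs rule: T_starts.induct) auto

lemma T_go_le: "T_go p0 L dp xs \<le> 1 + sum_list (map (\<lambda>x. 4 * length (fst x) + 5) xs)"
  by (induction p0 L dp xs rule: T_go.induct)
     (auto simp: T_ends_eq T_starts_eq T_append len_ends len_starts)

lemma lpos_Suc: "lpos len vs (Suc j) = lpos len vs j + elen len vs j"
  by (simp add: lpos_def)

lemma ex_split3:
  assumes "j < m"
  shows "(\<exists>i s e. j \<le> i \<and> i < m \<and> P i s e) =
         ((\<exists>s e. P j s e) \<or> (\<exists>i s e. Suc j \<le> i \<and> i < m \<and> P i s e))"
  using assms by (auto simp: Suc_le_eq) (metis le_neq_implies_less less_imp_le)+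

lemma go_set:
  fixes len :: "'v \<Rightarrow> 'v \<Rightarrow> real"
  assumes "1 \<le> j" "j < n" "n = length vs"
  shows "x \<in> set (go p0 (lpos len vs j) (elen len vs (j - 1))
            (map (\<lambda>i. (Il (vs ! i), elen len vs i)) [j..<n])) \<longleftrightarrow>
    ((\<exists>i s e. j \<le> i \<and> i < n - 1 \<and> (s, e) \<in> set (Il (vs ! i)) \<and> x = e + p0 - lplus len vs i) \<or>
     (\<exists>i s e. j \<le> i \<and> i < n \<and> (s, e) \<in> set (Il (vs ! i)) \<and> x = s + p0 - lminus len vs i) \<or>
     x = 1 - (lplus len vs (n - 1) - lplus len vs (n - 2)) + p0 - lminus len vs (n - 1))"
proof -
  have jle: "j \<le> n - 1" using assms by simp
  then show ?thesis using assms(1)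
proof (induction j rule: inc_induct)
  case base
  have n2: "n \<ge> 2" using base assms by simp
  then obtain m where m: "n = Suc (Suc m)" by (metis add_2_eq_Suc le_Suc_ex)
  have up: "[Suc m..<n] = [Suc m]" using m by simp
  have e: "elen len vs (Suc m) = 0" using assms m by (auto simp: elen_def)
  have l1: "lpos len vs (Suc m) = lpos len vs m + elen len vs m"
    by (rule lpos_Suc)
  have "x \<in> set (go p0 (lpos len vs (Suc m)) (elen len vs m)
            (map (\<lambda>i. (Il (vs ! i), elen len vs i)) [Suc m..<n])) \<longleftrightarrow>
       ((\<exists>s e. (s, e) \<in> set (Il (vs ! (Suc m))) \<and> x = s + p0 - lminus len vs (Suc m)) \<or>
        x = 1 - (lplus len vs (Suc m) - lplus len vs m) + p0 - lminus len vs (Suc m))"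
    unfolding up
    by (auto simp: set_starts lminus_def lplus_def e l1 algebra_simps)
  moreover have A: "(\<exists>i s e. Suc m \<le> i \<and> i < Suc m \<and> (s, e) \<in> set (Il (vs ! i)) \<and> x = e + p0 - lplus len vs i) = False"
    by auto
  moreover have B: "(\<exists>i s e. Suc m \<le> i \<and> i < Suc (Suc m) \<and> (s, e) \<in> set (Il (vs ! i)) \<and> x = s + p0 - lminus len vs i)
     = (\<exists>s e. (s, e) \<in> set (Il (vs ! Suc m)) \<and> x = s + p0 - lminus len vs (Suc m))"
    by (auto simp: le_less_Suc_eq)
  moreover have C: "Suc (Suc m) - 2 = m" by simp
  ultimately show ?case unfolding m by (simp only: A B C diff_Suc_1 simp_thms)
next
  case (step j)
  have j1: "1 \<le> j" using step by simp
  have jn: "Suc j < n" using step by simp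
  have up: "[j..<n] = j # Suc j # [Suc (Suc j)..<n]" using jn by (simp add: upt_rec)
  have up2: "[Suc j..<n] = Suc j # [Suc (Suc j)..<n]" using jn by (simp add: upt_rec)
  note IH = step.IH[OF le_SucI[OF j1]]
  have G: "go p0 (lpos len vs j) (elen len vs (j - 1)) (map (\<lambda>i. (Il (vs ! i), elen len vs i)) [j..<n])
    = ends (p0 - lplus len vs j) (Il (vs ! j)) @ starts (p0 - lminus len vs j) (Il (vs ! j)) @
      go p0 (lpos len vs (Suc j)) (elen len vs (Suc j - 1)) (map (\<lambda>i. (Il (vs ! i), elen len vs i)) [Suc j..<n])"
    unfolding up up2 using j1 by (simp add: lplus_def lminus_def lpos_Suc)
  have H: "x \<in> set (go p0 (lpos len vs j) (elen len vs (j - 1)) (map (\<lambda>i. (Il (vs ! i), elen len vs i)) [j..<n]))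
    \<longleftrightarrow> (\<exists>s e. (s, e) \<in> set (Il (vs ! j)) \<and> x = e + p0 - lplus len vs j) \<or>
        (\<exists>s e. (s, e) \<in> set (Il (vs ! j)) \<and> x = s + p0 - lminus len vs j) \<or>
        x \<in> set (go p0 (lpos len vs (Suc j)) (elen len vs (Suc j - 1)) (map (\<lambda>i. (Il (vs ! i), elen len vs i)) [Suc j..<n]))"
    unfolding G by (auto simp: set_ends set_starts algebra_simps)
  show ?case
    unfolding H IH
    using ex_split3[of j "n - 1" "\<lambda>i s e. (s, e) \<in> set (Il (vs ! i)) \<and> x = e + p0 - lplus len vs i"]
      ex_split3[of j n "\<lambda>i s e. (s, e) \<in> set (Il (vs ! i)) \<and> x = s + p0 - lminus len vs i"] jn
    by auto
qed
qed

lemma Cvert_mem: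
  "x \<in> Cvert len I vs i \<longleftrightarrow> (\<exists>a b. a < b \<and> b \<le> length vs - 1 \<and>
     x \<in> (\<lambda>\<tau>. \<tau> + (lplus len vs i - lplus len vs a)) ` Cpair len I vs a b)"
  unfolding Cvert_def by (auto split: if_splits)

lemma Jset_lo:
  assumes "a < length vs - 1"
  shows "Jset len I vs a = I (vs ! a) \<union> (if a = 0 then {(lplus len vs 0, lplus len vs 0)} else {})"
  using assms by (auto simp: Jset_def Let_def)

lemma Jset_hi:
  assumes "0 < b" "b \<le> length vs - 1"
  shows "Jset len I vs b = I (vs ! b) \<union> (if b = length vs - 1 then
     {(1 - (lplus len vs (length vs - 1) - lplus len vs (length vs - 1 - 1)),
       1 - (lplus len vs (length vs - 1) - lplus len vs (length vs - 1 - 1)))} else {})"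
  using assms by (auto simp: Jset_def Let_def)

lemma Cvert0_iff:
  fixes len :: "'v \<Rightarrow> 'v \<Rightarrow> real"
  assumes "n = length vs" "n \<ge> 2"
  shows "x \<in> Cvert len I vs 0 \<longleftrightarrow>
    x = lplus len vs 0 \<or>
    (\<exists>a s e. a < n - 1 \<and> (s, e) \<in> I (vs ! a) \<and> x = e + lplus len vs 0 - lplus len vs a) \<or>
    (\<exists>b s e. 1 \<le> b \<and> b < n \<and> (s, e) \<in> I (vs ! b) \<and> x = s + lplus len vs 0 - lminus len vs b) \<or>
    x = 1 - (lplus len vs (n - 1) - lplus len vs (n - 2)) + lplus len vs 0 - lminus len vs (n - 1)"
  (is "_ \<longleftrightarrow> ?R")
proof
  assume "x \<in> Cvert len I vs 0"
  then obtain a b where ab: "a < b" "b \<le> n - 1"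
    and xin: "x \<in> (\<lambda>\<tau>. \<tau> + (lplus len vs 0 - lplus len vs a)) ` Cpair len I vs a b"
    unfolding Cvert_mem assms(1) by blast
  have a: "a < length vs - 1" using ab assms by simp
  have b: "0 < b" "b \<le> length vs - 1" using ab assms by auto
  have nn: "length vs - 1 - 1 = n - 2" using assms by simp
  from xin obtain \<tau> where x: "x = \<tau> + (lplus len vs 0 - lplus len vs a)"
    and t: "\<tau> \<in> Cpair len I vs a b" by blast
  from t consider (A) ts where "(ts, \<tau>) \<in> Jset len I vs a"
    | (B) ts te where "(ts, te) \<in> Jset len I vs b" "\<tau> = ts - (lminus len vs b - lplus len vs a)"
    unfolding Cpair_def by blast
  then show ?R
  proof cases
    case A
    then have "(ts, \<tau>) \<in> I (vs ! a) \<or> (a = 0 \<and> \<tau> = lplus len vs 0)"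
      unfolding Jset_lo[OF a] by (auto split: if_splits)
    then show ?thesis
    proof
      assume h: "(ts, \<tau>) \<in> I (vs ! a)"
      have "\<exists>a s e. a < n - 1 \<and> (s, e) \<in> I (vs ! a) \<and> x = e + lplus len vs 0 - lplus len vs a"
        using h a assms x by (intro exI[of _ a] exI[of _ ts] exI[of _ \<tau>]) auto
      then show ?thesis by blast
    next
      assume "a = 0 \<and> \<tau> = lplus len vs 0"
      then show ?thesis using x by auto
    qed
  next
    case B
    then have "(ts, te) \<in> I (vs ! b) \<or> (b = n - 1 \<and> ts = 1 - (lplus len vs (n - 1) - lplus len vs (n - 2)))"
      unfolding Jset_hi[OF b] nn using assms by (auto split: if_splits)
    then show ?thesis
    proof
      assume h: "(ts, te) \<in> I (vs ! b)"
      have "\<exists>b s e. 1 \<le> b \<and> b < n \<and> (s, e) \<in> I (vs ! b) \<and> x = s + lplus len vs 0 - lminus len vs b"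
        using h b B assms x by (intro exI[of _ b] exI[of _ ts] exI[of _ te]) auto
      then show ?thesis by blast
    next
      assume "b = n - 1 \<and> ts = 1 - (lplus len vs (n - 1) - lplus len vs (n - 2))"
      then show ?thesis using x B by auto
    qed
  qed
next
  assume R: ?R
  have k1: "n - 1 < length vs" "0 < n - 1" using assms by auto
  have nn: "length vs - 1 - 1 = n - 2" using assms by simp
  have j0: "Jset len I vs 0 = I (vs ! 0) \<union> {(lplus len vs 0, lplus len vs 0)}"
    using Jset_lo[of 0 vs len I] assms by simp
  show "x \<in> Cvert len I vs 0"
    unfolding Cvert_mem
  proof -
    from R consider (1) "x = lplus len vs 0"
      | (2) a s e where "a < n - 1" "(s, e) \<in> I (vs ! a)" "x = e + lplus len vs 0 - lplus len vs a"
      | (3) b s e where "1 \<le> b" "b < n" "(s, e) \<in> I (vs ! b)" "x = s + lplus len vs 0 - lminus len vs b"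
      | (4) "x = 1 - (lplus len vs (n - 1) - lplus len vs (n - 2)) + lplus len vs 0 - lminus len vs (n - 1)"
      by blast
    then show "\<exists>a b. a < b \<and> b \<le> length vs - 1 \<and>
     x \<in> (\<lambda>\<tau>. \<tau> + (lplus len vs 0 - lplus len vs a)) ` Cpair len I vs a b"
    proof cases
      case 1
      have "x \<in> (\<lambda>\<tau>. \<tau> + (lplus len vs 0 - lplus len vs 0)) ` Cpair len I vs 0 1"
        unfolding Cpair_def j0 using 1 by force
      then show ?thesis using assms by (intro exI[of _ 0] exI[of _ 1]) auto
    next
      case 2
      have "Jset len I vs a \<supseteq> I (vs ! a)" using 2 assms by (auto simp: Jset_def Let_def)
      then have "x \<in> (\<lambda>\<tau>. \<tau> + (lplus len vs 0 - lplus len vs a)) ` Cpair len I vs a (Suc a)"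
        unfolding Cpair_def using 2 by (auto intro!: image_eqI[of _ _ e])
      then show ?thesis using 2 assms by (intro exI[of _ a] exI[of _ "Suc a"]) auto
    next
      case 3
      have "Jset len I vs b \<supseteq> I (vs ! b)" using 3 assms by (auto simp: Jset_def Let_def)
      then have "x \<in> (\<lambda>\<tau>. \<tau> + (lplus len vs 0 - lplus len vs 0)) ` Cpair len I vs 0 b"
        unfolding Cpair_def using 3 by (auto intro!: image_eqI[of _ _ "s - (lminus len vs b - lplus len vs 0)"])
      then show ?thesis using 3 assms by (intro exI[of _ 0] exI[of _ b]) auto
    next
      case 4
      let ?c = "1 - (lplus len vs (n - 1) - lplus len vs (n - 2))"
      have "(?c, ?c) \<in> Jset len I vs (n - 1)" using assms by (simp add: Jset_def Let_def numeral_2_eq_2)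
      then have "x \<in> (\<lambda>\<tau>. \<tau> + (lplus len vs 0 - lplus len vs 0)) ` Cpair len I vs 0 (n - 1)"
      proof -
        have "?c - (lminus len vs (n - 1) - lplus len vs 0) \<in> Cpair len I vs 0 (n - 1)"
          unfolding Cpair_def using \<open>(?c, ?c) \<in> Jset len I vs (n - 1)\<close> by blast
        then show ?thesis using 4 by (intro image_eqI[of _ _ "?c - (lminus len vs (n - 1) - lplus len vs 0)"]) auto
      qed
      then show ?thesis using k1 assms by (intro exI[of _ 0] exI[of _ "n - 1"]) auto
    qed
  qed
qed

theorem lemma1:
  "\<exists>c::nat. \<forall>(E :: ('v \<times> 'v) set) len I Il vs.
     task_assistance_graph E len I \<longrightarrow> is_path E vs \<longrightarrow> length vs \<ge> 2 \<longrightarrow>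
     (\<forall>v. set (Il v) = I v \<and> distinct (Il v)) \<longrightarrow>
     (let k = length vs - 1;
          N = (\<Sum>i\<le>k. card (I (vs ! i)));
          inp = map (\<lambda>i. (Il (vs ! i), elen len vs i)) [0..<length vs]
      in set (crit0 inp) = Cvert len I vs 0 \<and> T_crit0 inp \<le> c * (k + N))"
proof (intro exI[of _ 11] allI impI)
  fix E :: "('v \<times> 'v) set" and len I Il and vs :: "'v list"
  assume ta: "task_assistance_graph E len I" and pth: "is_path E vs" and n2: "length vs \<ge> 2"
    and Il: "\<forall>v. set (Il v) = I v \<and> distinct (Il v)"
  define n where "n = length vs"
  define F where "F = (\<lambda>i. (Il (vs ! i), elen len vs i))"
  have n2': "n \<ge> 2" using n2 n_def by simp
  have inp: "map F [0..<n] = F 0 # map F [1..<n]" using n2' by (simp add: upt_rec)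
  have lp0: "lplus len vs 0 = elen len vs 0 / 2" by (simp add: lplus_def lpos_def)
  have lpos1: "lpos len vs 1 = elen len vs 0" by (simp add: lpos_def)
  have cr: "crit0 (map F [0..<n]) = ends 0 ((lplus len vs 0, lplus len vs 0) # Il (vs ! 0)) @
     go (lplus len vs 0) (lpos len vs 1) (elen len vs (1 - 1)) (map F [1..<n])"
    unfolding inp by (simp add: F_def lp0 lpos_def)
  have IlI: "\<And>i. I (vs ! i) = set (Il (vs ! i))" using Il by simp
  have n1: "0 < n - 1" "n - 1 < n" using n2' by auto
  have key: "x \<in> set (crit0 (map F [0..<n])) \<longleftrightarrow> x \<in> Cvert len I vs 0" for x
  proof -
    have CR: "x \<in> set (crit0 (map F [0..<n])) \<longleftrightarrow>
       x = lplus len vs 0 \<or> (\<exists>s e. (s, e) \<in> set (Il (vs ! 0)) \<and> x = e + lplus len vs 0 - lplus len vs 0)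
        \<or> x \<in> set (go (lplus len vs 0) (lpos len vs 1) (elen len vs (1 - 1)) (map F [1..<n]))"
        (is "_ \<longleftrightarrow> ?P1 \<or> ?P2 \<or> ?P3")
      unfolding cr by (auto simp: set_ends)
    have GS: "?P3 \<longleftrightarrow>
    ((\<exists>i s e. 1 \<le> i \<and> i < n - 1 \<and> (s, e) \<in> set (Il (vs ! i)) \<and> x = e + lplus len vs 0 - lplus len vs i) \<or>
     (\<exists>i s e. 1 \<le> i \<and> i < n \<and> (s, e) \<in> set (Il (vs ! i)) \<and> x = s + lplus len vs 0 - lminus len vs i) \<or>
     x = 1 - (lplus len vs (n - 1) - lplus len vs (n - 2)) + lplus len vs 0 - lminus len vs (n - 1))"
      unfolding F_def by (rule go_set) (use n2' n_def in auto)
    have C: "x \<in> Cvert len I vs 0 \<longleftrightarrow>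
    x = lplus len vs 0 \<or>
    (\<exists>a s e. a < n - 1 \<and> (s, e) \<in> set (Il (vs ! a)) \<and> x = e + lplus len vs 0 - lplus len vs a) \<or>
    (\<exists>b s e. 1 \<le> b \<and> b < n \<and> (s, e) \<in> set (Il (vs ! b)) \<and> x = s + lplus len vs 0 - lminus len vs b) \<or>
    x = 1 - (lplus len vs (n - 1) - lplus len vs (n - 2)) + lplus len vs 0 - lminus len vs (n - 1)"
      using Cvert0_iff[OF n_def n2', where x=x and I=I and len=len] unfolding IlI .
    show ?thesis
      unfolding CR C GS
    proof (intro iffI; elim disjE exE conjE)
      fix s e assume "(s, e) \<in> set (Il (vs ! 0))" "x = e + lplus len vs 0 - lplus len vs 0"
      then show "x = lplus len vs 0 \<or>
    (\<exists>a s e. a < n - 1 \<and> (s, e) \<in> set (Il (vs ! a)) \<and> x = e + lplus len vs 0 - lplus len vs a) \<or>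
    (\<exists>b s e. 1 \<le> b \<and> b < n \<and> (s, e) \<in> set (Il (vs ! b)) \<and> x = s + lplus len vs 0 - lminus len vs b) \<or>
    x = 1 - (lplus len vs (n - 1) - lplus len vs (n - 2)) + lplus len vs 0 - lminus len vs (n - 1)"
        using n1 by blast
    next
      fix a s e assume h: "a < n - 1" "(s, e) \<in> set (Il (vs ! a))" "x = e + lplus len vs 0 - lplus len vs a"
      show "?P1 \<or> ?P2 \<or>
    ((\<exists>i s e. 1 \<le> i \<and> i < n - 1 \<and> (s, e) \<in> set (Il (vs ! i)) \<and> x = e + lplus len vs 0 - lplus len vs i) \<or>
     (\<exists>i s e. 1 \<le> i \<and> i < n \<and> (s, e) \<in> set (Il (vs ! i)) \<and> x = s + lplus len vs 0 - lminus len vs i) \<or>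
     x = 1 - (lplus len vs (n - 1) - lplus len vs (n - 2)) + lplus len vs 0 - lminus len vs (n - 1))"
      proof (cases "a = 0")
        case True
        then show ?thesis using h by blast
      next
        case False
        then have "1 \<le> a" by simp
        then show ?thesis using h by blast
      qed
    qed blast+
  qed
  have setc: "set (crit0 (map F [0..<n])) = Cvert len I vs 0"
    using key by blast
  have lenc: "\<And>i. length (Il (vs ! i)) = card (I (vs ! i))"
    using Il by (metis distinct_card)
  define S where "S = (\<Sum>i\<in>{1..<n}. card (I (vs ! i)))"
  have sl: "sum_list (map (\<lambda>x. 4 * length (fst x) + 5) (map F [1..<n])) = 4 * S + 5 * (n - 1)"
  proof -
    have "sum_list (map (\<lambda>x. 4 * length (fst x) + 5) (map F [1..<n]))
        = (\<Sum>i\<in>{1..<n}. 4 * card (I (vs ! i)) + 5)"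
      by (simp add: sum_set_upt_conv_sum_list_nat[symmetric] F_def lenc o_def)
    also have "\<dots> = 4 * S + 5 * (n - 1)"
      by (simp add: S_def sum.distrib sum_distrib_left)
    finally show ?thesis .
  qed
  have Nsum: "(\<Sum>i\<le>n - 1. card (I (vs ! i))) = card (I (vs ! 0)) + S"
  proof -
    have "{..n - 1} = {0..<n}" using n2' by auto
    then show ?thesis unfolding S_def using n2'
      by (simp add: sum.atLeast_Suc_lessThan)
  qed
  have T: "T_crit0 (map F [0..<n]) \<le> 11 * (n - 1 + (\<Sum>i\<le>n - 1. card (I (vs ! i))))"
  proof -
    have "T_crit0 (map F [0..<n]) = T_ends 0 ((elen len vs 0 / 2, elen len vs 0 / 2) # Il (vs ! 0))
       + T_go (elen len vs 0 / 2) (elen len vs 0) (elen len vs 0) (map F [1..<n])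
       + T_append (ends 0 ((elen len vs 0 / 2, elen len vs 0 / 2) # Il (vs ! 0)))
           (go (elen len vs 0 / 2) (elen len vs 0) (elen len vs 0) (map F [1..<n])) + 1"
      unfolding inp by (simp add: F_def)
    also have "\<dots> \<le> 2 * card (I (vs ! 0)) + 6 + 4 * S + 5 * (n - 1)"
      using T_go_le[of "elen len vs 0 / 2" "elen len vs 0" "elen len vs 0" "map F [1..<n]"]
      unfolding sl by (simp add: T_ends_eq T_append len_ends lenc)
    also have "\<dots> \<le> 11 * (n - 1 + (\<Sum>i\<le>n - 1. card (I (vs ! i))))"
      unfolding Nsum using n1 by simp
    finally show ?thesis .
  qed
  show "let k = length vs - 1; N = \<Sum>i\<le>k. card (I (vs ! i));
           inp = map (\<lambda>i. (Il (vs ! i), elen len vs i)) [0..<length vs]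
       in set (crit0 inp) = Cvert len I vs 0 \<and> T_crit0 inp \<le> 11 * (k + N)"
    using setc T unfolding Let_def F_def n_def by simp
qed


end
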